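(* Let $Y=T\times_H\mathfrak h^\circ\times\mathbb C^{h+1}$ be a tall local model with moment map $\Phi_Y$ and let $N$ be the degree of its defining polynomial $P(z)=\prod_jz_j^{\xi_j}$. Then for all $[t,\alpha,z]\in\Phi_Y^{-1}(0)$, $$|z|^2=N\Big(\prod_j\xi_j^{\xi_j}\Big)^{-1/N}|P(z)|^{2/N},$$ with the convention $0^0=1$.
   Context: $T$ is a torus with Lie algebra $\mathfrak t$, $H\subseteq T$ a closed subgroup of dimension $h$ with Lie algebra $\mathfrak h$, $\rho\colon H\to(S^1)^{h+1}$ an injective homomorphism, $\eta_i\in\mathfrak h^*$ the differential of the $i$-th component of $\rho$. A fixed inner product on $\mathfrak t$ identifies $\mathfrak t^*\cong\mathfrak h^\circ\oplus\mathfrak h^*$. The local model $Y=T\times_H\mathfrak h^\circ\times\mathbb C^{h+1}$ ($H$ acting on $T$ by multiplication, trivially on $\mathfrak h^\circ$, on $\mathbb C^{h+1}$ by $h\cdot z=\rho(h^{-1})z$) has $T$-action $s\cdot[t,\alpha,z]=[st,\alpha,z]$ and moment map $\Phi_Y([t,\alpha,z])=\alpha+\frac12\sum_i\eta_i|z_i|^2$. $Y$ is tall if $\Phi_Y^{-1}(0)$ contains more than one $T$-orbit; then there is a unique $\xi\in\mathbb Z_{\ge0}^{h+1}$ with $\lambda\mapsto\prod_j\lambda_j^{\xi_j}$ giving a short exact sequence $1\to H\xrightarrow{\rho}(S^1)^{h+1}\to S^1\to1$; the defining polynomial is $P(z)=\prod_jz_j^{\xi_j}$ and its degree is $N=\sum_j\xi_j$.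 *)

theory Defs
  imports "HOL-Analysis.Analysis"
begin

text \<open>The torus T of dimension n is the compact group
  (S^1)^n, realised as unit-modulus vectors in complex^'n with componentwise
  multiplication; its Lie algebra is real^'n with exponential map
  X \<mapsto> (exp(2 pi i X_k))_k. Elements of the dual t^* are represented by
  vectors in real^'n via the standard (coordinate) pairing.\<close>

definition torus :: "(complex^'n) set" where
  "torus = {t. \<forall>k. cmod (t$k) = 1}"

definition vmul :: "complex^'n \<Rightarrow> complex^'n \<Rightarrow> complex^'n" where
  "vmul a b = (\<chi> k. a$k * b$k)"

definition vinv :: "complex^'n \<Rightarrow> complex^'n" where
  "vinv a = (\<chi> k. inverse (a$k))"

definition vone :: "complex^'n" where
  "vone = (\<chi> k. 1)"

definition texp :: "real^'n \<Rightarrow> complex^'n" where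
  "texp X = (\<chi> k. cis (2 * pi * X$k))"

definition closed_subgroup :: "(complex^'n) set \<Rightarrow> bool" where
  "closed_subgroup H \<longleftrightarrow> H \<subseteq> torus \<and> closed H \<and> vone \<in> H \<and>
     (\<forall>a\<in>H. \<forall>b\<in>H. vmul a b \<in> H) \<and> (\<forall>a\<in>H. vinv a \<in> H)"

definition lie_alg :: "(complex^'n) set \<Rightarrow> (real^'n) set" where
  "lie_alg H = {X. \<forall>s::real. texp (s *\<^sub>R X) \<in> H}"

definition annih :: "(complex^'n) set \<Rightarrow> (real^'n) set" where
  "annih H = {\<alpha>. \<forall>X\<in>lie_alg H. \<alpha> \<bullet> X = 0}"

text \<open>Injective Lie group homomorphism rho : H \<rightarrow> (S^1)^m (continuity suffices,
  continuous homomorphisms of Lie groups being smooth).\<close>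
definition inj_hom :: "(complex^'n) set \<Rightarrow> (complex^'n \<Rightarrow> complex^'m) \<Rightarrow> bool" where
  "inj_hom H \<rho> \<longleftrightarrow> \<rho> ` H \<subseteq> torus \<and> inj_on \<rho> H \<and> continuous_on H \<rho> \<and>
     (\<forall>a\<in>H. \<forall>b\<in>H. \<rho> (vmul a b) = vmul (\<rho> a) (\<rho> b))"

text \<open>eta_j in h^*: the differential of the j-th component of rho, i.e. for X in h,
  rho_j(exp(sX)) = exp(2 pi i s eta_j(X)).\<close>
definition eta :: "(complex^'n \<Rightarrow> complex^'m) \<Rightarrow> 'm \<Rightarrow> real^'n \<Rightarrow> real" where
  "eta \<rho> j X = (THE c. \<forall>s::real. \<rho> (texp (s *\<^sub>R X)) $ j = cis (2 * pi * c * s))"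

text \<open>Moment map of Y = T \<times>_H h^o \<times> C^m at a representative (t, alpha, z), with
  values in t^* = h^o (+) h^*: the h^o-component alpha and the h^*-component
  (1/2) sum_j eta_j |z_j|^2 (as a function on h).\<close>
definition moment_map :: "(complex^'n) set \<Rightarrow> (complex^'n \<Rightarrow> complex^'m) \<Rightarrow>
    (complex^'n) \<times> (real^'n) \<times> (complex^'m) \<Rightarrow> (real^'n) \<times> (real^'n \<Rightarrow> real)" where
  "moment_map H \<rho> p = (case p of (t, \<alpha>, z) \<Rightarrow>
     (\<alpha>, \<lambda>X. if X \<in> lie_alg H then (1/2) * (\<Sum>j\<in>UNIV. eta \<rho> j X * (cmod (z$j))\<^sup>2) else 0))"

text \<open>Representatives of points of Y: t in T, alpha in h^o, z in C^m.\<close>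
definition model_pts :: "(complex^'n) set \<Rightarrow> ((complex^'n) \<times> (real^'n) \<times> (complex^'m)) set" where
  "model_pts H = torus \<times> annih H \<times> UNIV"

definition zero_level :: "(complex^'n) set \<Rightarrow> (complex^'n \<Rightarrow> complex^'m) \<Rightarrow>
    ((complex^'n) \<times> (real^'n) \<times> (complex^'m)) set" where
  "zero_level H \<rho> = {p \<in> model_pts H. moment_map H \<rho> p = (0, \<lambda>X. 0)}"

text \<open>[t,alpha,z] = [g t, alpha, rho(g^-1) z] for g in H; two representatives lie
  in the same T-orbit of Y iff [t',alpha',z'] = [s t, alpha, z] for some s in T.\<close>
definition same_T_orbit :: "(complex^'n) set \<Rightarrow> (complex^'n \<Rightarrow> complex^'m) \<Rightarrow>
    (complex^'n) \<times> (real^'n) \<times> (complex^'m) \<Rightarrow> (complex^'n) \<times> (real^'n) \<times> (complex^'m) \<Rightarrow> bool" where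
  "same_T_orbit H \<rho> p q = (case p of (t, \<alpha>, z) \<Rightarrow> case q of (t', \<alpha>', z') \<Rightarrow>
     (\<exists>s\<in>torus. \<exists>g\<in>H. t' = vmul g (vmul s t) \<and> \<alpha>' = \<alpha> \<and> z' = vmul (\<rho> (vinv g)) z))"

definition tall :: "(complex^'n) set \<Rightarrow> (complex^'n \<Rightarrow> complex^'m) \<Rightarrow> bool" where
  "tall H \<rho> \<longleftrightarrow> (\<exists>p\<in>zero_level H \<rho>. \<exists>q\<in>zero_level H \<rho>. \<not> same_T_orbit H \<rho> p q)"

text \<open>xi gives a short exact sequence 1 \<rightarrow> H \<rightarrow> (S^1)^m \<rightarrow> S^1 \<rightarrow> 1
  (injectivity of rho is part of inj_hom).\<close>
definition exact_seq :: "(complex^'n) set \<Rightarrow> (complex^'n \<Rightarrow> complex^'m) \<Rightarrow> ('m \<Rightarrow> nat) \<Rightarrow> bool" where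
  "exact_seq H \<rho> \<xi> \<longleftrightarrow>
     \<rho> ` H = {l\<in>torus. (\<Prod>j\<in>UNIV. (l$j) ^ \<xi> j) = 1} \<and>
     (\<forall>w. cmod w = 1 \<longrightarrow> (\<exists>l\<in>torus. (\<Prod>j\<in>UNIV. (l$j) ^ \<xi> j) = w))"

definition defining_poly :: "('m::finite \<Rightarrow> nat) \<Rightarrow> complex^'m \<Rightarrow> complex" where
  "defining_poly \<xi> z = (\<Prod>j\<in>UNIV. (z$j) ^ \<xi> j)"

definition poly_degree :: "('m::finite \<Rightarrow> nat) \<Rightarrow> nat" where
  "poly_degree \<xi> = (\<Sum>j\<in>UNIV. \<xi> j)"

end

theory Submission
  imports Defs
begin


lemma cis_unique:
  assumes "\<forall>s. cis (2 * pi * c * s) = cis (2 * pi * d * (s::real))"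
  shows "c = d"
proof (rule ccontr)
  assume ne: "c \<noteq> d"
  have "cis (2*pi*c*(1/(2*(c-d)))) = cis (2*pi*d*(1/(2*(c-d))))" using assms by blast
  then have "cis (2*pi*c*(1/(2*(c-d)))) / cis (2*pi*d*(1/(2*(c-d)))) = 1" by simp
  then have "cis (2*pi*c*(1/(2*(c-d))) - 2*pi*d*(1/(2*(c-d)))) = 1" by (simp add: cis_divide)
  moreover have "2*pi*c*(1/(2*(c-d))) - 2*pi*d*(1/(2*(c-d))) = 2*pi*(c-d)*(1/(2*(c-d)))"
    by (simp only: left_diff_distrib right_diff_distrib)
  moreover have "2*pi*(c-d)*(1/(2*(c-d))) = pi * ((2*(c-d)) * inverse (2*(c-d)))"
    by (simp add: divide_inverse mult_ac)
  moreover have "(2*(c-d)) * inverse (2*(c-d)) = 1" using ne by simp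
  ultimately show False by simp
qed

lemma exp_eq1_norm:
  assumes "exp (w::complex) = 1" "w \<noteq> 0"
  shows "2*pi \<le> norm w"
proof -
  obtain n::int where "Re w = 0" "Im w = of_int (2*n) * pi" using assms(1) exp_eq_1 by blast
  moreover have "n \<noteq> 0" using assms(2) calculation by (simp add: complex_eq_iff)
  ultimately have "norm w = \<bar>of_int (2*n) * pi\<bar>" by (simp add: cmod_def)
  also have "\<dots> = 2 * \<bar>real_of_int n\<bar> * pi" by (simp add: abs_mult)
  also have "\<dots> \<ge> 2 * 1 * pi" using \<open>n \<noteq> 0\<close>
    by (intro mult_right_mono mult_left_mono) auto
  finally show ?thesis by simp
qed

lemma additive_linear:
  fixes h :: "real \<Rightarrow> complex"
  assumes cont: "continuous_on UNIV h" and add: "\<And>a b. h (a+b) = h a + h b"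
  shows "h s = of_real s * h 1"
proof -
  have h0: "h 0 = 0" using add[of 0 0] by simp
  have neg: "h (-x) = - h x" for x using add[of x "-x"] h0 by (simp add: eq_neg_iff_add_eq_0 add.commute)
  have natm: "h (of_nat n * x) = of_nat n * h x" for n x
    by (induction n) (auto simp: h0 distrib_right add)
  have intm: "h (of_int k * x) = of_int k * h x" for k x
  proof (cases "k \<ge> 0")
    case True then show ?thesis using natm[of "nat k" x] by simp
  next
    case False
    then have "h (of_int k * x) = h (- (of_nat (nat (-k)) * x))" by simp
    also have "\<dots> = - (of_nat (nat (-k)) * h x)" by (simp only: neg natm)
    finally show ?thesis using False by simp
  qed
  have rat: "h q - of_real q * h 1 = 0" if "q \<in> \<rat>" for q
  proof -
    obtain a b where q: "q = of_int a / of_int b" "b \<noteq> 0"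
    proof (rule Rats_cases'[OF \<open>q \<in> \<rat>\<close>])
      fix a b :: int assume "0 < b" "q = of_int a / of_int b"
      then show thesis using that[of a b] by simp
    qed
    have "of_int b * h q = h (of_int b * q)" by (simp add: intm)
    also have "\<dots> = h (of_int a * 1)" using q by simp
    also have "\<dots> = of_int a * h 1" by (simp only: intm)
    finally have "of_int b * h q = of_int a * h 1" .
    then have "h q = of_int a * h 1 / of_int b" using q(2) by (simp add: field_simps)
    moreover have "(of_real q :: complex) = of_int a / of_int b" using q by simp
    ultimately show ?thesis by simp
  qed
  have c2: "continuous_on UNIV (\<lambda>x. h x - of_real x * h 1)"
    by (intro continuous_intros cont)
  have "(\<lambda>x. h x - of_real x * h 1) s = 0"
  proof (rule continuous_constant_on_closure[of \<rat> "\<lambda>x. h x - of_real x * h 1" 0 s])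
    show "continuous_on (closure \<rat>) (\<lambda>x. h x - complex_of_real x * h 1)"
      unfolding Rats_closure_real by (rule c2)
    show "\<And>x. x \<in> \<rat> \<Longrightarrow> h x - complex_of_real x * h 1 = 0" by (rule rat)
    show "s \<in> closure \<rat>" unfolding Rats_closure_real by simp
  qed
  then show ?thesis by simp
qed

lemma char_R:
  fixes f :: "real \<Rightarrow> complex"
  assumes cont: "continuous_on UNIV f" and nrm: "\<And>s. cmod (f s) = 1"
    and mult: "\<And>a b. f (a+b) = f a * f b"
  shows "\<exists>c. \<forall>s. f s = cis (2 * pi * c * s)"
proof -
  have nz: "f x \<noteq> 0" for x using nrm[of x] by auto
  have nz': "\<And>z. z \<in> UNIV \<Longrightarrow> f z \<noteq> 0" using nz by simp
  obtain g where contg: "continuous_on UNIV g" and fg0: "\<And>x. x \<in> UNIV \<Longrightarrow> f x = exp (g x)"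
    using continuous_logarithm_on_contractible[OF cont convex_imp_contractible[OF convex_UNIV] nz'] by blast
  have fg: "\<And>x. f x = exp (g x)" using fg0 by simp
  have kconst: "g (a+b) - g a - g b = - g 0" for a b
  proof -
    let ?k = "\<lambda>b. g (a+b) - g a - g b"
    have ek: "exp (?k b) = 1" for b
      using mult[of a b] nz[of a] nz[of b] by (simp add: exp_diff fg)
    have "?k constant_on UNIV"
    proof (rule continuous_discrete_range_constant)
      show "continuous_on UNIV ?k"
        by (intro continuous_intros continuous_on_compose2[OF contg] contg) auto
      fix x :: real assume "x \<in> UNIV"
      show "\<exists>e>0. \<forall>y. y \<in> UNIV \<and> ?k y \<noteq> ?k x \<longrightarrow> e \<le> norm (?k y - ?k x)"
      proof (intro exI[of _ "2*pi"] conjI allI impI)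
        fix y assume Hy: "y \<in> UNIV \<and> ?k y \<noteq> ?k x"
        have e1: "exp (?k y - ?k x) = 1"
        proof -
          have d: "exp (?k y - ?k x) = exp (?k y) / exp (?k x)" by (rule exp_diff)
          show ?thesis unfolding d ek by simp
        qed
        have ne: "?k y - ?k x \<noteq> 0" using Hy by (metis eq_iff_diff_eq_0)
        show "2*pi \<le> norm (?k y - ?k x)" by (rule exp_eq1_norm[OF e1 ne])
      qed simp
    qed simp
    then obtain y where y: "\<And>x. ?k x = y" by (auto simp: constant_on_def)
    have "?k b = ?k 0" by (simp only: y)
    then show ?thesis by simp
  qed
  define h where "h x = g x - g 0" for x
  have hadd: "h (a+b) = h a + h b" for a b using kconst[of a b] by (simp add: h_def algebra_simps)
  have hcont: "continuous_on UNIV h" unfolding h_def by (intro continuous_intros contg)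
  have hl: "h s = of_real s * h 1" for s by (rule additive_linear[OF hcont hadd])
  have f0: "f 0 = 1" using mult[of 0 0] nz[of 0] by simp
  have fh: "f s = exp (of_real s * h 1)" for s
  proof -
    have e0: "exp (g 0) = 1" using fg[of 0] f0 by simp
    have "f s = exp (g s - g 0 + g 0)" by (simp add: fg)
    also have "\<dots> = exp (h s)" by (simp only: exp_add e0 h_def mult_1_right)
    also have "\<dots> = exp (of_real s * h 1)" using hl[of s] by simp
    finally show ?thesis .
  qed
  have "cmod (f 1) = exp (Re (h 1))" using fh[of 1] by simp
  then have re: "Re (h 1) = 0" using nrm[of 1] by simp
  have "f s = cis (2 * pi * (Im (h 1) / (2*pi)) * s)" for s
  proof -
    have hi: "h 1 = \<i> * of_real (Im (h 1))" using re
      by (simp add: complex_eq_iff)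
    have "f s = exp (\<i> * of_real (s * Im (h 1)))" using fh[of s]
      by (subst (asm) hi) (simp add: mult_ac)
    also have "\<dots> = cis (s * Im (h 1))" by (simp add: cis_conv_exp)
    also have "s * Im (h 1) = 2 * pi * (Im (h 1) / (2*pi)) * s" by simp
    finally show ?thesis .
  qed
  then show ?thesis by blast
qed

lemma torus_bounded: "bounded (torus :: (complex^'n) set)"
proof -
  have "norm x \<le> sqrt (real CARD('n))" if "x \<in> torus" for x :: "complex^'n"
    using that by (simp add: norm_vec_def L2_set_def torus_def)
  then show ?thesis unfolding bounded_iff by blast
qed

lemma lie_surj:
  fixes H :: "(complex^'n) set" and \<rho> :: "complex^'n \<Rightarrow> complex^'m" and \<xi> :: "'m \<Rightarrow> nat"
  assumes cs: "closed_subgroup H" and ih: "inj_hom H \<rho>" and ex: "exact_seq H \<rho> \<xi>"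
    and v: "(\<Sum>j\<in>UNIV. real (\<xi> j) * v$j) = 0"
  shows "\<exists>X\<in>lie_alg H. \<forall>j. eta \<rho> j X = v$j"
proof -
  have Htor: "H \<subseteq> torus" using cs by (simp add: closed_subgroup_def)
  have Hmul: "\<And>a b. a \<in> H \<Longrightarrow> b \<in> H \<Longrightarrow> vmul a b \<in> H" using cs by (simp add: closed_subgroup_def)
  have compH: "compact H" using cs torus_bounded bounded_subset Htor
    by (simp add: closed_subgroup_def compact_eq_bounded_closed) blast
  have injr: "inj_on \<rho> H" and contr: "continuous_on H \<rho>"
    and rmul: "\<And>a b. a \<in> H \<Longrightarrow> b \<in> H \<Longrightarrow> \<rho> (vmul a b) = vmul (\<rho> a) (\<rho> b)"
    using ih by (auto simp: inj_hom_def)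
  have img: "\<rho> ` H = {l\<in>torus. (\<Prod>j\<in>UNIV. (l$j) ^ \<xi> j) = 1}"
    using ex by (simp add: exact_seq_def)
  define L where "L s = (texp (s *\<^sub>R v) :: complex^'m)" for s
  have Lj: "L s $ j = cis (2 * pi * (v$j) * s)" for s j
    by (simp add: L_def texp_def mult_ac)
  have Lpow: "(L s $ j) ^ \<xi> j = exp (\<i> * of_real (2 * pi * s) * of_real (real (\<xi> j) * v$j))" for s j
  proof -
    have "(L s $ j) ^ \<xi> j = exp (\<i> * of_real (2 * pi * (v$j) * s)) ^ \<xi> j"
      by (simp add: Lj cis_conv_exp)
    also have "\<dots> = exp (of_nat (\<xi> j) * (\<i> * of_real (2 * pi * (v$j) * s)))"
      by (simp only: exp_of_nat_mult)
    finally show ?thesis by (simp add: mult_ac)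
  qed
  have LH: "L s \<in> \<rho> ` H" for s
  proof -
    have "(\<Prod>j\<in>UNIV. (L s$j) ^ \<xi> j) = exp (\<Sum>j\<in>UNIV. \<i> * of_real (2 * pi * s) * of_real (real (\<xi> j) * v$j))"
      by (simp add: Lpow exp_sum)
    also have "(\<Sum>j\<in>UNIV. \<i> * of_real (2 * pi * s) * of_real (real (\<xi> j) * v$j)) =
        \<i> * of_real (2 * pi * s) * of_real (\<Sum>j\<in>UNIV. real (\<xi> j) * v$j)"
      by (simp add: sum_distrib_left)
    finally have "(\<Prod>j\<in>UNIV. (L s$j) ^ \<xi> j) = 1" using v by simp
    moreover have "L s \<in> torus" by (simp add: torus_def Lj)
    ultimately show ?thesis using img by blast
  qed
  define \<gamma> where "\<gamma> s = inv_into H \<rho> (L s)" for s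
  have \<gamma>H: "\<gamma> s \<in> H" for s using LH[of s] by (simp add: \<gamma>_def inv_into_into)
  have \<rho>\<gamma>: "\<rho> (\<gamma> s) = L s" for s using LH[of s] by (simp add: \<gamma>_def f_inv_into_f)
  have contL: "continuous_on UNIV L"
    unfolding L_def texp_def by (intro continuous_intros)
  have continv: "continuous_on (\<rho> ` H) (inv_into H \<rho>)"
    by (rule continuous_on_inv[OF contr compH]) (simp add: injr)
  have cont\<gamma>: "continuous_on UNIV \<gamma>"
    unfolding \<gamma>_def by (rule continuous_on_compose2[OF continv contL]) (use LH in blast)
  have Ladd: "L (a+b) = vmul (L a) (L b)" for a b
    by (simp add: vec_eq_iff vmul_def Lj cis_mult distrib_left)
  have \<gamma>add: "\<gamma> (a+b) = vmul (\<gamma> a) (\<gamma> b)" for a b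
  proof -
    have "\<rho> (vmul (\<gamma> a) (\<gamma> b)) = \<rho> (\<gamma> (a+b))"
      using rmul[OF \<gamma>H \<gamma>H] by (simp add: \<rho>\<gamma> Ladd)
    then show ?thesis using injr \<gamma>H Hmul[OF \<gamma>H \<gamma>H] by (metis inj_on_def)
  qed
  have "\<forall>k. \<exists>c. \<forall>s. \<gamma> s $ k = cis (2 * pi * c * s)"
  proof
    fix k
    show "\<exists>c. \<forall>s. \<gamma> s $ k = cis (2 * pi * c * s)"
    proof (rule char_R)
      show "continuous_on UNIV (\<lambda>s. \<gamma> s $ k)" by (intro continuous_intros cont\<gamma>)
      show "cmod (\<gamma> s $ k) = 1" for s using \<gamma>H[of s] Htor by (auto simp: torus_def)
      show "\<gamma> (a + b) $ k = \<gamma> a $ k * \<gamma> b $ k" for a b by (simp add: \<gamma>add vmul_def)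
    qed
  qed
  then obtain c where c: "\<And>k s. \<gamma> s $ k = cis (2 * pi * c k * s)" by metis
  define X :: "real^'n" where "X = (\<chi> k. c k)"
  have tX: "texp (s *\<^sub>R X) = \<gamma> s" for s
    by (simp add: vec_eq_iff texp_def X_def c mult_ac)
  have XL: "X \<in> lie_alg H" by (simp add: lie_alg_def tX \<gamma>H)
  have "eta \<rho> j X = v$j" for j
    unfolding eta_def
  proof (rule the_equality)
    show "\<forall>s. \<rho> (texp (s *\<^sub>R X)) $ j = cis (2 * pi * v $ j * s)" by (simp add: tX \<rho>\<gamma> Lj)
    fix d assume "\<forall>s. \<rho> (texp (s *\<^sub>R X)) $ j = cis (2 * pi * d * s)"
    then have "\<forall>s. cis (2 * pi * d * s) = cis (2 * pi * (v$j) * s)" by (simp add: tX \<rho>\<gamma> Lj)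
    then show "d = v$j" by (rule cis_unique)
  qed
  then show ?thesis using XL by blast
qed



lemma final_alg:
  fixes a :: "'m::finite \<Rightarrow> real" and \<xi> :: "'m \<Rightarrow> nat" and z :: "complex^'m"
  assumes az: "\<And>j. a j = (cmod (z$j))\<^sup>2" and as: "\<And>j. a j = s * real (\<xi> j)" and s0: "s \<ge> 0"
    and j0: "\<xi> j0 > 0"
  shows "(\<Sum>j\<in>UNIV. (cmod (z$j))\<^sup>2) =
      real (poly_degree \<xi>) * (real (\<Prod>j\<in>UNIV. \<xi> j ^ \<xi> j)) powr (- 1 / real (poly_degree \<xi>))
        * (cmod (defining_poly \<xi> z)) powr (2 / real (poly_degree \<xi>))"
proof -
  define N where "N = poly_degree \<xi>"
  define Q where "Q = real (\<Prod>j\<in>UNIV. \<xi> j ^ \<xi> j)"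
  define M where "M = cmod (defining_poly \<xi> z)"
  have Npos: "N > 0" unfolding N_def poly_degree_def
    using j0 member_le_sum[of j0 UNIV \<xi>] by simp
  have Qeq: "Q = (\<Prod>j\<in>UNIV. real (\<xi> j) ^ \<xi> j)" by (simp add: Q_def)
  have Qpos: "Q > 0" unfolding Qeq
  proof (rule prod_pos)
    fix j :: 'm
    show "0 < real (\<xi> j) ^ \<xi> j" by (cases "\<xi> j = 0") auto
  qed
  have lhs: "(\<Sum>j\<in>UNIV. (cmod (z$j))\<^sup>2) = s * real N"
    by (simp add: az[symmetric] as sum_distrib_left[symmetric] N_def poly_degree_def)
  have M: "M = (\<Prod>j\<in>UNIV. cmod (z$j) ^ \<xi> j)"
    by (simp add: M_def defining_poly_def prod_norm[symmetric] norm_power)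
  have "M\<^sup>2 = (\<Prod>j\<in>UNIV. (cmod (z$j))\<^sup>2 ^ \<xi> j)"
    by (simp add: M prod_power_distrib power_mult[symmetric] mult.commute)
  also have "\<dots> = (\<Prod>j\<in>UNIV. s ^ \<xi> j * real (\<xi> j) ^ \<xi> j)"
    by (simp add: az[symmetric] as power_mult_distrib)
  also have "\<dots> = s ^ N * Q"
    by (simp add: prod.distrib Qeq N_def poly_degree_def power_sum)
  finally have M2: "M\<^sup>2 = s ^ N * Q" .
  have M0: "M \<ge> 0" by (simp add: M_def)
  have key: "M powr (2 / real N) = s * Q powr (1 / real N)"
  proof (cases "s = 0")
    case True
    then have "M\<^sup>2 = 0" using M2 Npos by (simp add: zero_power)
    then have "M = 0" by simp
    then show ?thesis using True by simp
  next
    case False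
    then have sp: "s > 0" using s0 by simp
    have "M\<^sup>2 > 0" using M2 sp Qpos by simp
    then have Mp: "M > 0" using M0 by (cases "M = 0") auto
    have "M powr (2 / real N) = (M powr 2) powr (1 / real N)" by (simp add: powr_powr)
    also have "M powr 2 = s ^ N * Q" using Mp M2 by (simp add: powr_numeral)
    also have "(s ^ N * Q) powr (1 / real N) = (s ^ N) powr (1 / real N) * Q powr (1 / real N)"
      using sp Qpos by (simp add: powr_mult)
    also have "(s ^ N) powr (1 / real N) = s"
    proof -
      have "(s ^ N) powr (1 / real N) = (s powr real N) powr (1 / real N)" using sp by (simp add: powr_realpow)
      also have "\<dots> = s powr (real N * (1 / real N))" by (rule powr_powr)
      also have "real N * (1 / real N) = 1" using Npos by simp
      finally show ?thesis using sp by simp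
    qed
    finally show ?thesis .
  qed
  have qq: "Q powr (- 1 / real N) * Q powr (1 / real N) = 1"
  proof -
    have "Q powr (- 1 / real N) * Q powr (1 / real N) = Q powr (- 1 / real N + 1 / real N)"
      by (rule powr_add[symmetric])
    also have "- 1 / real N + 1 / real N = 0" by (simp add: divide_simps)
    finally show ?thesis using Qpos by simp
  qed
  have "real N * Q powr (- 1 / real N) * M powr (2 / real N)
      = real N * s * (Q powr (- 1 / real N) * Q powr (1 / real N))"
    unfolding key by (simp only: mult_ac)
  also have "\<dots> = s * real N" unfolding qq by simp
  finally have fin: "real N * Q powr (- 1 / real N) * M powr (2 / real N) = s * real N" .
  show ?thesis unfolding lhs N_def[symmetric] Q_def[symmetric] M_def[symmetric] by (rule fin[symmetric])
qed



theorem lemma2p7: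
  fixes H :: "(complex^'n) set" and \<rho> :: "complex^'n \<Rightarrow> complex^'m" and \<xi> :: "'m \<Rightarrow> nat"
  assumes "closed_subgroup H"
    and "CARD('m) = dim (lie_alg H) + 1"
    and "inj_hom H \<rho>"
    and "tall H \<rho>"
    and "exact_seq H \<rho> \<xi>"
  shows "\<forall>(t, \<alpha>, z) \<in> zero_level H \<rho>.
    (\<Sum>j\<in>UNIV. (cmod (z$j))\<^sup>2) =
      real (poly_degree \<xi>) * (real (\<Prod>j\<in>UNIV. \<xi> j ^ \<xi> j)) powr (- 1 / real (poly_degree \<xi>))
        * (cmod (defining_poly \<xi> z)) powr (2 / real (poly_degree \<xi>))"
proof -
  note cs = assms(1) and ih = assms(3) and ex = assms(5)
  obtain j0 where j0: "\<xi> j0 > 0"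
  proof (rule ccontr)
    assume "\<not> thesis"
    then have all0: "\<And>j. \<xi> j = 0" using that by blast
    have "\<forall>w. cmod w = 1 \<longrightarrow> (\<exists>l\<in>torus. (\<Prod>j\<in>UNIV. ((l::complex^'m)$j) ^ \<xi> j) = w)"
      using ex unfolding exact_seq_def by blast
    then obtain l :: "complex^'m" where "(\<Prod>j\<in>UNIV. (l$j) ^ \<xi> j) = -1"
      by (metis norm_minus_cancel norm_one)
    then show False using all0 by simp
  qed
  {
    fix t \<alpha> z assume zl: "(t, \<alpha>, z) \<in> zero_level H \<rho>"
    define a where "a j = (cmod (z$j))\<^sup>2" for j
    have mm: "moment_map H \<rho> (t, \<alpha>, z) = (0, \<lambda>X. 0)" using zl by (simp add: zero_level_def)
    have mX: "(\<Sum>j\<in>UNIV. eta \<rho> j X * a j) = 0" if "X \<in> lie_alg H" for X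
    proof -
      have fe: "(\<lambda>X. if X \<in> lie_alg H then (1/2) * (\<Sum>j\<in>UNIV. eta \<rho> j X * (cmod (z$j))\<^sup>2) else 0) = (\<lambda>X. 0)"
        using mm by (simp add: moment_map_def)
      have "(1/2) * (\<Sum>j\<in>UNIV. eta \<rho> j X * (cmod (z$j))\<^sup>2) = (0::real)"
        using fun_cong[OF fe, of X] that by simp
      then show ?thesis by (simp add: a_def)
    qed
    have orth: "(\<Sum>j\<in>UNIV. v$j * a j) = 0" if vz: "(\<Sum>j\<in>UNIV. real (\<xi> j) * v$j) = 0" for v
    proof -
      obtain X where X1: "X \<in> lie_alg H" and X2: "\<forall>j. eta \<rho> j X = v$j"
        using lie_surj[OF cs ih ex vz] by blast
      have "(\<Sum>j\<in>UNIV. eta \<rho> j X * a j) = 0" by (rule mX[OF X1])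
      then show ?thesis using X2 by simp
    qed
    have rel: "real (\<xi> j0) * a j = real (\<xi> j) * a j0" for j
    proof -
      define v :: "real^'m" where
        "v = (\<chi> i. (if i = j then real (\<xi> j0) else 0) - (if i = j0 then real (\<xi> j) else 0))"
      have e1: "(\<lambda>i. real (\<xi> i) * v$i) = (\<lambda>i. (if i = j then real (\<xi> i) * real (\<xi> j0) else 0)
          - (if i = j0 then real (\<xi> i) * real (\<xi> j) else 0))"
        by (auto simp: v_def fun_eq_iff)
      have "(\<Sum>i\<in>UNIV. real (\<xi> i) * v$i) = 0"
        unfolding e1 sum_subtractf by simp
      then have "(\<Sum>i\<in>UNIV. v$i * a i) = 0" by (rule orth)
      moreover have e2: "(\<lambda>i. v$i * a i) = (\<lambda>i. (if i = j then real (\<xi> j0) * a i else 0)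
          - (if i = j0 then real (\<xi> j) * a i else 0))"
        by (auto simp: v_def fun_eq_iff)
      ultimately show ?thesis
        unfolding e2 sum_subtractf by simp
    qed
    define s where "s = a j0 / real (\<xi> j0)"
    have as: "a j = s * real (\<xi> j)" for j using rel[of j] j0 by (simp add: s_def field_simps)
    have s0: "s \<ge> 0" by (simp add: s_def a_def)
    have "(\<Sum>j\<in>UNIV. (cmod (z$j))\<^sup>2) =
      real (poly_degree \<xi>) * (real (\<Prod>j\<in>UNIV. \<xi> j ^ \<xi> j)) powr (- 1 / real (poly_degree \<xi>))
        * (cmod (defining_poly \<xi> z)) powr (2 / real (poly_degree \<xi>))"
    proof (rule final_alg)
      show "\<And>j. a j = (cmod (z$j))\<^sup>2" by (simp add: a_def)
      show "\<And>j. a j = s * real (\<xi> j)" by (rule as)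
      show "0 \<le> s" by (rule s0)
      show "0 < \<xi> j0" by (rule j0)
    qed
  }
  then show ?thesis by blast
qed

end
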